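(* Let $W_{(\alpha,\beta)}=(T_1,T_2)$ be a commuting 2-variable weighted shift and let $L=\begin{pmatrix} T_1^*T_1 & T_2^*T_1\\ T_1^*T_2 & T_2^*T_2\end{pmatrix}$. Then the following are equivalent: (a) $L\ge0$; (b) $\alpha_{\mathbf{k}+\varepsilon_2}\beta_{\mathbf{k}+\varepsilon_1}\le\alpha_{\mathbf{k}+\varepsilon_1}\beta_{\mathbf{k}+\varepsilon_2}$ for all $\mathbf{k}\in\mathbb{Z}_+^2$; (c) $\gamma_{\mathbf{k}+\varepsilon_1+\varepsilon_2}^2\le\gamma_{\mathbf{k}+2\varepsilon_1}\gamma_{\mathbf{k}+2\varepsilon_2}$ for all $\mathbf{k}\in\mathbb{Z}_+^2$.
   Context: A 2-variable weighted shift $W_{(\alpha,\beta)}=(T_1,T_2)$ on $\ell^2(\mathbb{Z}_+^2)$ (orthonormal basis $\{e_{\mathbf{k}}\}$) is given by bounded positive weights via $T_1e_{\mathbf{k}}=\alpha_{\mathbf{k}}e_{\mathbf{k}+\varepsilon_1}$, $T_2e_{\mathbf{k}}=\beta_{\mathbf{k}}e_{\mathbf{k}+\varepsilon_2}$, $\varepsilon_1=(1,0)$, $\varepsilon_2=(0,1)$; it is commuting iff $\beta_{\mathbf{k}+\varepsilon_1}\alpha_{\mathbf{k}}=\alpha_{\mathbf{k}+\varepsilon_2}\beta_{\mathbf{k}}$ for all $\mathbf{k}$. The moments are $\gamma_{(0,0)}=1$ and, for $\mathbf{k}=(k_1,k_2)$, $\gamma_{\mathbf{k}}=\alpha_{(0,0)}^2\cdots\alpha_{(k_1-1,0)}^2\,\beta_{(k_1,0)}^2\cdots\beta_{(k_1,k_2-1)}^2$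 (empty products equal $1$). *)

theory Defs
  imports "HOL-Analysis.Analysis" "HOL-Library.Complex_Order"
begin

type_synonym idx = "nat \<times> nat"

definition ell2 :: "(idx \<Rightarrow> complex) set" where
  "ell2 = {x. (\<lambda>k. (cmod (x k))\<^sup>2) summable_on UNIV}"

definition l2inner :: "(idx \<Rightarrow> complex) \<Rightarrow> (idx \<Rightarrow> complex) \<Rightarrow> complex" where
  "l2inner x y = (\<Sum>\<^sub>\<infinity>k. x k * cnj (y k))"

text \<open>T1 e_k = alpha_k e_(k+eps1), T2 e_k = beta_k e_(k+eps2), acting on coordinates.\<close>
definition T1 :: "(idx \<Rightarrow> real) \<Rightarrow> (idx \<Rightarrow> complex) \<Rightarrow> (idx \<Rightarrow> complex)" where
  "T1 \<alpha> x = (\<lambda>(k1,k2). if k1 = 0 then 0 else complex_of_real (\<alpha> (k1-1,k2)) * x (k1-1,k2))"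

definition T2 :: "(idx \<Rightarrow> real) \<Rightarrow> (idx \<Rightarrow> complex) \<Rightarrow> (idx \<Rightarrow> complex)" where
  "T2 \<beta> x = (\<lambda>(k1,k2). if k2 = 0 then 0 else complex_of_real (\<beta> (k1,k2-1)) * x (k1,k2-1))"

definition T1adj :: "(idx \<Rightarrow> real) \<Rightarrow> (idx \<Rightarrow> complex) \<Rightarrow> (idx \<Rightarrow> complex)" where
  "T1adj \<alpha> x = (\<lambda>(k1,k2). complex_of_real (\<alpha> (k1,k2)) * x (k1+1,k2))"

definition T2adj :: "(idx \<Rightarrow> real) \<Rightarrow> (idx \<Rightarrow> complex) \<Rightarrow> (idx \<Rightarrow> complex)" where
  "T2adj \<beta> x = (\<lambda>(k1,k2). complex_of_real (\<beta> (k1,k2)) * x (k1,k2+1))"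

definition Lop :: "(idx \<Rightarrow> real) \<Rightarrow> (idx \<Rightarrow> real) \<Rightarrow>
    (idx \<Rightarrow> complex) \<times> (idx \<Rightarrow> complex) \<Rightarrow> (idx \<Rightarrow> complex) \<times> (idx \<Rightarrow> complex)" where
  "Lop \<alpha> \<beta> v = (let x = fst v; y = snd v in
     (\<lambda>k. T1adj \<alpha> (T1 \<alpha> x) k + T2adj \<beta> (T1 \<alpha> y) k,
      \<lambda>k. T1adj \<alpha> (T2 \<beta> x) k + T2adj \<beta> (T2 \<beta> y) k))"

definition L_positive :: "(idx \<Rightarrow> real) \<Rightarrow> (idx \<Rightarrow> real) \<Rightarrow> bool" where
  "L_positive \<alpha> \<beta> = (\<forall>x\<in>ell2. \<forall>y\<in>ell2.
     0 \<le> l2inner (fst (Lop \<alpha> \<beta> (x,y))) x + l2inner (snd (Lop \<alpha> \<beta> (x,y))) y)"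

definition weighted_shift :: "(idx \<Rightarrow> real) \<Rightarrow> (idx \<Rightarrow> real) \<Rightarrow> bool" where
  "weighted_shift \<alpha> \<beta> = ((\<forall>k. 0 < \<alpha> k \<and> 0 < \<beta> k) \<and> bdd_above (range \<alpha>) \<and> bdd_above (range \<beta>))"

definition commuting_shift :: "(idx \<Rightarrow> real) \<Rightarrow> (idx \<Rightarrow> real) \<Rightarrow> bool" where
  "commuting_shift \<alpha> \<beta> = (\<forall>k1 k2. \<beta> (k1+1,k2) * \<alpha> (k1,k2) = \<alpha> (k1,k2+1) * \<beta> (k1,k2))"

definition moment :: "(idx \<Rightarrow> real) \<Rightarrow> (idx \<Rightarrow> real) \<Rightarrow> idx \<Rightarrow> real" where
  "moment \<alpha> \<beta> k = (\<Prod>i<fst k. (\<alpha> (i,0))\<^sup>2) * (\<Prod>j<snd k. (\<beta> (fst k, j))\<^sup>2)"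

end

theory Submission
  imports Defs
begin

definition hm :: "idx \<Rightarrow> idx" where "hm k = (fst k - 1, snd k + 1)"
definition hp :: "idx \<Rightarrow> idx" where "hp k = (fst k + 1, snd k - 1)"

definition ccf :: "(idx \<Rightarrow> real) \<Rightarrow> (idx \<Rightarrow> real) \<Rightarrow> (idx \<Rightarrow> complex) \<Rightarrow> (idx \<Rightarrow> complex) \<Rightarrow> idx \<Rightarrow> complex" where
  "ccf \<alpha> \<beta> x y k = (if fst k = 0 then 0 else complex_of_real (\<alpha> (hm k) * \<beta> k) * y (hm k) * cnj (x k))"

definition eef :: "(idx \<Rightarrow> real) \<Rightarrow> (idx \<Rightarrow> real) \<Rightarrow> (idx \<Rightarrow> complex) \<Rightarrow> (idx \<Rightarrow> complex) \<Rightarrow> idx \<Rightarrow> complex" where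
  "eef \<alpha> \<beta> x y k = (if snd k = 0 then 0 else cnj (ccf \<alpha> \<beta> x y (hp k)))"

lemma xcnj: "x * cnj x = complex_of_real ((cmod x)^2)"
  by (rule complex_norm_square[symmetric])

lemma fstLop: "fst (Lop \<alpha> \<beta> (x,y)) k = complex_of_real ((\<alpha> k)^2) * x k
   + (if fst k = 0 then 0 else complex_of_real (\<alpha> (hm k) * \<beta> k) * y (hm k))"
proof -
  obtain a b where k: "k = (a,b)" by force
  show ?thesis
    by (auto simp: k Lop_def T1adj_def T1_def T2adj_def hm_def power2_eq_square mult_ac)
qed

lemma sndLop: "snd (Lop \<alpha> \<beta> (x,y)) k = 
   (if snd k = 0 then 0 else complex_of_real (\<alpha> k * \<beta> (hp k)) * x (hp k)) + complex_of_real ((\<beta> k)^2) * y k"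
proof -
  obtain a b where k: "k = (a,b)" by force
  show ?thesis
    by (auto simp: k Lop_def T1adj_def T2_def T2adj_def hp_def power2_eq_square mult_ac)
qed

lemma lop1: "fst (Lop \<alpha> \<beta> (x,y)) k * cnj (x k) = complex_of_real ((\<alpha> k)^2 * (cmod (x k))^2) + ccf \<alpha> \<beta> x y k"
proof -
  have "fst (Lop \<alpha> \<beta> (x,y)) k * cnj (x k) = complex_of_real ((\<alpha> k)^2) * (x k * cnj (x k))
     + (if fst k = 0 then 0 else complex_of_real (\<alpha> (hm k) * \<beta> k) * y (hm k)) * cnj (x k)"
    unfolding fstLop by (simp add: algebra_simps)
  also have "\<dots> = complex_of_real ((\<alpha> k)^2 * (cmod (x k))^2) + ccf \<alpha> \<beta> x y k"
    unfolding xcnj ccf_def by simp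
  finally show ?thesis .
qed

lemma hm_hp: "snd k \<noteq> 0 \<Longrightarrow> hm (hp k) = k"
  by (cases k) (auto simp: hm_def hp_def)

lemma fst_hp[simp]: "fst (hp k) \<noteq> 0"
  by (simp add: hp_def)

lemma lop2: "snd (Lop \<alpha> \<beta> (x,y)) k * cnj (y k) = eef \<alpha> \<beta> x y k + complex_of_real ((\<beta> k)^2 * (cmod (y k))^2)"
proof -
  have "snd (Lop \<alpha> \<beta> (x,y)) k * cnj (y k) = 
   (if snd k = 0 then 0 else complex_of_real (\<alpha> k * \<beta> (hp k)) * x (hp k)) * cnj (y k) + complex_of_real ((\<beta> k)^2) * (y k * cnj (y k))"
    unfolding sndLop by (simp add: algebra_simps)
  also have "\<dots> = eef \<alpha> \<beta> x y k + complex_of_real ((\<beta> k)^2 * (cmod (y k))^2)"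
    unfolding xcnj eef_def ccf_def by (auto simp: hm_hp mult_ac)
  finally show ?thesis .
qed


lemma hp_hm: "fst k \<noteq> 0 \<Longrightarrow> hp (hm k) = k"
  by (cases k) (auto simp: hm_def hp_def)

lemma snd_hm[simp]: "snd (hm k) \<noteq> 0"
  by (simp add: hm_def)

lemma inj_hm: "inj_on hm {k. fst k \<noteq> 0}"
  by (rule inj_on_inverseI[where g=hp]) (auto simp: hp_hm)

lemma inj_hp: "inj_on hp {k. snd k \<noteq> 0}"
  by (rule inj_on_inverseI[where g=hm]) (auto simp: hm_hp)

lemma single_summable: "(\<lambda>k. if k = j then c else (0::'b::{comm_monoid_add,topological_space})) summable_on UNIV"
proof -
  have "(\<lambda>k. if k = j then c else (0::'b)) summable_on {j}" by simp
  then show ?thesis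
    using summable_on_cong_neutral[of UNIV "{j}" "\<lambda>k. if k = j then c else (0::'b)" "\<lambda>k. if k = j then c else (0::'b)"]
    by auto
qed

lemma single_infsum: "infsum (\<lambda>k. if k = j then c else (0::'b::{comm_monoid_add,t2_space})) UNIV = c"
proof -
  have "infsum (\<lambda>k. if k = j then c else (0::'b)) {j} = c" by simp
  then show ?thesis
    using infsum_cong_neutral[of UNIV "{j}" "\<lambda>k. if k = j then c else (0::'b)" "\<lambda>k. if k = j then c else (0::'b)"]
    by auto
qed

lemma infsum_of_real_complex:
  assumes "f summable_on A"
  shows "infsum (\<lambda>k. complex_of_real (f k)) A = complex_of_real (infsum f A)"
proof (rule complex_eqI)
  have s: "(\<lambda>k. complex_of_real (f k)) summable_on A" using assms by (rule summable_on_of_real)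
  show "Re (infsum (\<lambda>k. complex_of_real (f k)) A) = Re (complex_of_real (infsum f A))"
    using infsum_Re[OF s] by simp
  show "Im (infsum (\<lambda>k. complex_of_real (f k)) A) = Im (complex_of_real (infsum f A))"
    using infsum_Im[OF s] by simp
qed

lemma amgm: "(u::real) * v \<le> 1/2 * (u^2 + v^2)"
proof -
  have "0 \<le> (u - v)^2" by simp
  moreover have "(u - v)^2 = u^2 + v^2 - 2 * (u * v)" by (simp add: power2_diff)
  ultimately have "2 * (u * v) \<le> u^2 + v^2" by linarith
  then show ?thesis by simp
qed

lemma a_to_b:
  assumes ws: "weighted_shift \<alpha> \<beta>" and L: "L_positive \<alpha> \<beta>"
  shows "\<alpha> (k1,k2+1) * \<beta> (k1+1,k2) \<le> \<alpha> (k1+1,k2) * \<beta> (k1,k2+1)"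
proof -
  define j where "j = (k1+1,k2)"
  define m where "m = (k1,k2+1)"
  define s where "s = \<beta> m"
  define t where "t = - \<alpha> j"
  define x where "x = (\<lambda>k. if k = j then complex_of_real s else 0)"
  define y where "y = (\<lambda>k. if k = m then complex_of_real t else 0)"
  have hmj: "hm j = m" by (simp add: j_def m_def hm_def)
  have hpm: "hp m = j" by (simp add: j_def m_def hp_def)
  have fj: "fst j \<noteq> 0" by (simp add: j_def)
  have sm: "snd m \<noteq> 0" by (simp add: m_def)
  have xl: "x \<in> ell2"
  proof -
    have "(\<lambda>k. (cmod (x k))\<^sup>2) = (\<lambda>k. if k = j then (cmod (complex_of_real s))\<^sup>2 else 0)"
      by (auto simp: x_def)
    then show ?thesis unfolding ell2_def using single_summable by simp
  qed
  have yl: "y \<in> ell2"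
  proof -
    have "(\<lambda>k. (cmod (y k))\<^sup>2) = (\<lambda>k. if k = m then (cmod (complex_of_real t))\<^sup>2 else 0)"
      by (auto simp: y_def)
    then show ?thesis unfolding ell2_def using single_summable by simp
  qed
  define r where "r = \<alpha> m * \<beta> j * t * s"
  have e1: "(\<lambda>k. fst (Lop \<alpha> \<beta> (x,y)) k * cnj (x k)) = (\<lambda>k. if k = j then complex_of_real ((\<alpha> j)^2 * s^2 + r) else 0)"
  proof
    fix k
    show "fst (Lop \<alpha> \<beta> (x,y)) k * cnj (x k) = (if k = j then complex_of_real ((\<alpha> j)^2 * s^2 + r) else 0)"
      unfolding lop1 by (cases "k = j") (auto simp: ccf_def x_def y_def hmj fj r_def)
  qed
  have e2: "(\<lambda>k. snd (Lop \<alpha> \<beta> (x,y)) k * cnj (y k)) = (\<lambda>k. if k = m then complex_of_real (r + (\<beta> m)^2 * t^2) else 0)"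
  proof
    fix k
    have "hp k = j \<Longrightarrow> snd k \<noteq> 0 \<Longrightarrow> k = m"
      by (cases k) (auto simp: hp_def j_def m_def)
    then show "snd (Lop \<alpha> \<beta> (x,y)) k * cnj (y k) = (if k = m then complex_of_real (r + (\<beta> m)^2 * t^2) else 0)"
      unfolding lop2 by (cases "k = m") (auto simp: eef_def ccf_def x_def y_def hmj hpm sm fj r_def)
  qed
  have "0 \<le> l2inner (fst (Lop \<alpha> \<beta> (x,y))) x + l2inner (snd (Lop \<alpha> \<beta> (x,y))) y"
    using L xl yl unfolding L_positive_def by blast
  also have "l2inner (fst (Lop \<alpha> \<beta> (x,y))) x + l2inner (snd (Lop \<alpha> \<beta> (x,y))) y
     = complex_of_real ((\<alpha> j)^2 * s^2 + r + (r + (\<beta> m)^2 * t^2))"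
    unfolding l2inner_def e1 e2 single_infsum by simp
  finally have "0 \<le> (\<alpha> j)^2 * s^2 + r + (r + (\<beta> m)^2 * t^2)"
    by (simp add: less_eq_complex_def)
  then have "0 \<le> 2 * (\<alpha> j * \<beta> m) * (\<alpha> j * \<beta> m - \<alpha> m * \<beta> j)"
    by (simp add: r_def s_def t_def power2_eq_square algebra_simps)
  moreover have "0 < \<alpha> j * \<beta> m"
  proof -
    have "\<And>k. 0 < \<alpha> k \<and> 0 < \<beta> k" using ws unfolding weighted_shift_def by blast
    then show ?thesis by (simp add: mult_pos_pos)
  qed
  ultimately have "\<alpha> m * \<beta> j \<le> \<alpha> j * \<beta> m"
    by (simp add: zero_le_mult_iff)
  then show ?thesis by (simp add: j_def m_def mult.commute)
qed


lemma b_to_a: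
  assumes ws: "weighted_shift \<alpha> \<beta>"
    and b: "\<forall>k1 k2. \<alpha> (k1,k2+1) * \<beta> (k1+1,k2) \<le> \<alpha> (k1+1,k2) * \<beta> (k1,k2+1)"
  shows "L_positive \<alpha> \<beta>"
  unfolding L_positive_def
proof (intro ballI)
  fix x y assume xl: "x \<in> ell2" and yl: "y \<in> ell2"
  have pos: "\<And>k. 0 < \<alpha> k \<and> 0 < \<beta> k" using ws unfolding weighted_shift_def by blast
  obtain Ma where Ma: "\<And>k. \<alpha> k \<le> Ma" using ws unfolding weighted_shift_def bdd_above_def by auto
  obtain Mb where Mb: "\<And>k. \<beta> k \<le> Mb" using ws unfolding weighted_shift_def bdd_above_def by auto
  have nx: "(\<lambda>k. (cmod (x k))\<^sup>2) summable_on UNIV" using xl by (simp add: ell2_def)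
  have ny: "(\<lambda>k. (cmod (y k))\<^sup>2) summable_on UNIV" using yl by (simp add: ell2_def)
  define dx where "dx k = (\<alpha> k)^2 * (cmod (x k))^2" for k
  define dy where "dy k = (\<beta> k)^2 * (cmod (y k))^2" for k
  define c where "c = ccf \<alpha> \<beta> x y"
  define e where "e = eef \<alpha> \<beta> x y"
  define S1 where "S1 = {k::idx. fst k \<noteq> 0}"
  define S2 where "S2 = {k::idx. snd k \<noteq> 0}"
  define g where "g k = (if fst k = 0 then 0 else dy (hm k))" for k
  have dx_nn: "\<And>k. 0 \<le> dx k" and dy_nn: "\<And>k. 0 \<le> dy k" by (simp_all add: dx_def dy_def)
  have dx_sum: "dx summable_on UNIV"
  proof (rule summable_on_comparison_test[OF summable_on_cmult_right[OF nx, of "Ma^2"]])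
    fix k
    have "(\<alpha> k)^2 \<le> Ma^2" using pos[of k] Ma[of k] by (simp add: power_mono)
    then show "dx k \<le> Ma^2 * (cmod (x k))\<^sup>2" unfolding dx_def by (simp add: mult_right_mono)
  qed (simp add: dx_nn)
  have dy_sum: "dy summable_on UNIV"
  proof (rule summable_on_comparison_test[OF summable_on_cmult_right[OF ny, of "Mb^2"]])
    fix k
    have "(\<beta> k)^2 \<le> Mb^2" using pos[of k] Mb[of k] by (simp add: power_mono)
    then show "dy k \<le> Mb^2 * (cmod (y k))\<^sup>2" unfolding dy_def by (simp add: mult_right_mono)
  qed (simp add: dy_nn)
  have dyh: "dy summable_on (hm ` S1)"
    using summable_on_subset_banach[OF dy_sum] by blast
  have dyhm: "(dy \<circ> hm) summable_on S1"
    using dyh summable_on_reindex[OF inj_hm[folded S1_def]] by blast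
  have g_sum: "g summable_on UNIV"
    using dyhm summable_on_cong_neutral[of UNIV S1 g "dy \<circ> hm"] by (auto simp: S1_def g_def)
  have g_le: "infsum g UNIV \<le> infsum dy UNIV"
  proof -
    have "infsum g UNIV = infsum (dy \<circ> hm) S1"
      using infsum_cong_neutral[of S1 UNIV "dy \<circ> hm" g] by (auto simp: S1_def g_def)
    also have "\<dots> = infsum dy (hm ` S1)"
      by (rule infsum_reindex[OF inj_hm[folded S1_def], symmetric])
    also have "\<dots> \<le> infsum dy UNIV"
      by (rule infsum_mono_neutral[OF dyh dy_sum]) (auto simp: dy_nn)
    finally show ?thesis .
  qed
  have c_bound: "cmod (c k) \<le> 1/2 * (dx k + g k)" for k
  proof (cases "fst k = 0")
    case True
    then show ?thesis by (simp add: c_def ccf_def g_def dx_nn)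
  next
    case False
    define m where "m = hm k"
    have bk: "\<alpha> m * \<beta> k \<le> \<alpha> k * \<beta> m"
    proof -
      obtain a b where k: "k = (a,b)" by force
      from False k obtain a' where a: "a = a' + 1" by (cases a) auto
      show ?thesis using b[rule_format, of a' b] by (simp add: m_def hm_def k a mult.commute)
    qed
    have "cmod (c k) = \<alpha> m * \<beta> k * cmod (y m) * cmod (x k)"
      using False pos[of m] pos[of k] by (simp add: c_def ccf_def m_def norm_mult abs_mult)
    also have "\<dots> \<le> \<alpha> k * \<beta> m * cmod (y m) * cmod (x k)"
      by (intro mult_right_mono bk) auto
    also have "\<dots> = (\<alpha> k * cmod (x k)) * (\<beta> m * cmod (y m))" by simp
    also have "\<dots> \<le> 1/2 * ((\<alpha> k * cmod (x k))^2 + (\<beta> m * cmod (y m))^2)"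
      by (rule amgm)
    also have "\<dots> = 1/2 * (dx k + g k)"
      using False by (simp add: dx_def dy_def g_def m_def power_mult_distrib)
    finally show ?thesis .
  qed
  have dxg: "(\<lambda>k. 1/2 * (dx k + g k)) summable_on UNIV"
    by (intro summable_on_cmult_right summable_on_add dx_sum g_sum)
  have c_sum: "c summable_on UNIV"
    unfolding summable_on_iff_abs_summable_on_complex
    by (rule summable_on_comparison_test[OF dxg]) (rule c_bound, simp)
  have e_eq: "\<And>k. k \<in> S2 \<Longrightarrow> e k = cnj ((c \<circ> hp) k)"
    by (simp add: e_def eef_def S2_def c_def)
  have ch: "c summable_on (hp ` S2)"
    using summable_on_subset_banach[OF c_sum] by blast
  have chp: "(c \<circ> hp) summable_on S2"
    using ch summable_on_reindex[OF inj_hp[folded S2_def]] by blast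
  have e_sum: "e summable_on UNIV"
  proof -
    have "(\<lambda>k. cnj ((c \<circ> hp) k)) summable_on S2" using chp unfolding comp_def by simp
    then show ?thesis
      using summable_on_cong_neutral[of UNIV S2 e "\<lambda>k. cnj ((c \<circ> hp) k)"] e_eq
      by (auto simp: S2_def e_def eef_def)
  qed
  have e_inf: "infsum e UNIV = cnj (infsum c UNIV)"
  proof -
    have "infsum e UNIV = infsum (\<lambda>k. cnj ((c \<circ> hp) k)) S2"
      using infsum_cong_neutral[of S2 UNIV "\<lambda>k. cnj ((c \<circ> hp) k)" e] e_eq
      by (auto simp: S2_def e_def eef_def)
    also have "\<dots> = cnj (infsum (c \<circ> hp) S2)" by (simp add: comp_def)
    also have "infsum (c \<circ> hp) S2 = infsum c (hp ` S2)"
      by (rule infsum_reindex[OF inj_hp[folded S2_def], symmetric])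
    also have "\<dots> = infsum c UNIV"
    proof (rule infsum_cong_neutral)
      fix k assume "k \<in> UNIV - hp ` S2"
      then have "k \<notin> hp ` S2" by simp
      show "c k = 0"
      proof (cases "fst k = 0")
        case False
        then have "k = hp (hm k)" by (simp add: hp_hm)
        moreover have "hm k \<in> S2" by (simp add: S2_def hm_def)
        ultimately show ?thesis using \<open>k \<notin> hp ` S2\<close> by blast
      qed (simp add: c_def ccf_def)
    qed auto
    finally show ?thesis .
  qed
  define C where "C = infsum c UNIV"
  have dxc: "(\<lambda>k. complex_of_real (dx k)) summable_on UNIV" by (rule summable_on_of_real[OF dx_sum])
  have dyc: "(\<lambda>k. complex_of_real (dy k)) summable_on UNIV" by (rule summable_on_of_real[OF dy_sum])
  have Q1: "l2inner (fst (Lop \<alpha> \<beta> (x,y))) x = complex_of_real (infsum dx UNIV) + C"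
    unfolding l2inner_def lop1 C_def
    using infsum_add[OF dxc c_sum] infsum_of_real_complex[OF dx_sum]
    by (simp add: dx_def c_def)
  have Q2: "l2inner (snd (Lop \<alpha> \<beta> (x,y))) y = cnj C + complex_of_real (infsum dy UNIV)"
    unfolding l2inner_def lop2 C_def
    using infsum_add[OF e_sum dyc] infsum_of_real_complex[OF dy_sum] e_inf
    by (simp add: dy_def e_def)
  have ReC: "Re C = infsum (\<lambda>k. Re (c k)) UNIV"
    unfolding C_def using infsum_Re[OF c_sum] by simp
  have rc_sum: "(\<lambda>k. Re (c k)) summable_on UNIV" using summable_on_Re[OF c_sum] .
  have "0 \<le> infsum (\<lambda>k. dx k + g k + 2 * Re (c k)) UNIV"
  proof (rule infsum_nonneg)
    fix k
    have "- Re (c k) \<le> cmod (c k)" using abs_Re_le_cmod[of "c k"] by linarith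
    moreover have "cmod (c k) * 2 \<le> dx k + g k" using c_bound[of k] by simp
    ultimately show "0 \<le> dx k + g k + 2 * Re (c k)" by linarith
  qed
  also have "infsum (\<lambda>k. dx k + g k + 2 * Re (c k)) UNIV
      = infsum dx UNIV + infsum g UNIV + 2 * infsum (\<lambda>k. Re (c k)) UNIV"
  proof -
    have s1: "(\<lambda>k. dx k + g k) summable_on UNIV" by (intro summable_on_add dx_sum g_sum)
    have s2: "(\<lambda>k. 2 * Re (c k)) summable_on UNIV" by (intro summable_on_cmult_right rc_sum)
    show ?thesis
      using infsum_add[OF s1 s2] infsum_add[OF dx_sum g_sum] infsum_cmult_right[of 2 "\<lambda>k. Re (c k)" UNIV] rc_sum
      by simp
  qed
  finally have "0 \<le> infsum dx UNIV + infsum dy UNIV + 2 * Re C"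
    using g_le ReC by linarith
  moreover have "l2inner (fst (Lop \<alpha> \<beta> (x,y))) x + l2inner (snd (Lop \<alpha> \<beta> (x,y))) y
     = complex_of_real (infsum dx UNIV + infsum dy UNIV + 2 * Re C)"
    unfolding Q1 Q2 by (simp add: complex_eq_iff)
  ultimately show "0 \<le> l2inner (fst (Lop \<alpha> \<beta> (x,y))) x + l2inner (snd (Lop \<alpha> \<beta> (x,y))) y"
    by (simp add: less_eq_complex_def)
qed


lemma mom2: "moment \<alpha> \<beta> (a, Suc b) = moment \<alpha> \<beta> (a,b) * (\<beta> (a,b))^2"
  by (simp add: moment_def mult_ac)

lemma mom1:
  assumes cs: "commuting_shift \<alpha> \<beta>"
  shows "moment \<alpha> \<beta> (Suc a, b) = moment \<alpha> \<beta> (a,b) * (\<alpha> (a,b))^2"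
proof (induction b)
  case 0
  then show ?case by (simp add: moment_def)
next
  case (Suc b)
  have c: "\<beta> (a+1,b) * \<alpha> (a,b) = \<alpha> (a,b+1) * \<beta> (a,b)"
    using cs unfolding commuting_shift_def by blast
  have "moment \<alpha> \<beta> (Suc a, Suc b) = moment \<alpha> \<beta> (a,b) * (\<beta> (a+1,b) * \<alpha> (a,b))^2"
    using Suc by (simp add: mom2 power_mult_distrib mult_ac)
  also have "\<dots> = moment \<alpha> \<beta> (a,b) * (\<alpha> (a,b+1) * \<beta> (a,b))^2" by (simp only: c)
  also have "\<dots> = moment \<alpha> \<beta> (a, Suc b) * (\<alpha> (a, Suc b))^2"
    by (simp add: mom2 power_mult_distrib mult_ac)
  finally show ?case .
qed

lemma mom_pos:
  assumes "weighted_shift \<alpha> \<beta>"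
  shows "0 < moment \<alpha> \<beta> k"
proof -
  have pos: "\<And>k. 0 < \<alpha> k \<and> 0 < \<beta> k" using assms unfolding weighted_shift_def by blast
  have pos': "\<And>k. \<alpha> k \<noteq> 0 \<and> \<beta> k \<noteq> 0" using pos by (metis less_irrefl)
  show ?thesis unfolding moment_def
    by (intro mult_pos_pos prod_pos) (simp_all add: pos zero_less_power pos' )
qed

lemma key_eq:
  fixes g a a1 a2 b b1 b2 :: real
  assumes "0 < g" "0 < a" "0 < b" "0 < a1" "0 < a2" "0 < b1" "0 < b2"
    and c: "b1 * a = a2 * b"
  shows "(g * a^2 * b1^2)^2 \<le> (g * a^2 * a1^2) * (g * b^2 * b2^2) \<longleftrightarrow> a2 * b1 \<le> a1 * b2"
proof -
  have l: "(g * a^2 * b1^2)^2 = (g*a*b)^2 * (a2*b1)^2"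
  proof -
    have "(g * a^2 * b1^2)^2 = g^2 * a^2 * b1^2 * (b1 * a)^2" by (simp add: power2_eq_square)
    also have "\<dots> = (g*a*b)^2 * (a2*b1)^2" unfolding c by (simp add: power2_eq_square)
    finally show ?thesis .
  qed
  have r: "(g * a^2 * a1^2) * (g * b^2 * b2^2) = (g*a*b)^2 * (a1*b2)^2" by (simp add: power2_eq_square)
  have p: "0 < (g*a*b)^2" using assms by simp
  have "(g * a^2 * b1^2)^2 \<le> (g * a^2 * a1^2) * (g * b^2 * b2^2) \<longleftrightarrow> (a2*b1)^2 \<le> (a1*b2)^2"
    unfolding l r using p by simp
  also have "\<dots> \<longleftrightarrow> a2 * b1 \<le> a1 * b2"
    using assms by (intro power_mono_iff) auto
  finally show ?thesis .
qed

lemma b_iff_c: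
  assumes ws: "weighted_shift \<alpha> \<beta>" and cs: "commuting_shift \<alpha> \<beta>"
  shows "(moment \<alpha> \<beta> (k1+1,k2+1))\<^sup>2 \<le> moment \<alpha> \<beta> (k1+2,k2) * moment \<alpha> \<beta> (k1,k2+2)
     \<longleftrightarrow> \<alpha> (k1,k2+1) * \<beta> (k1+1,k2) \<le> \<alpha> (k1+1,k2) * \<beta> (k1,k2+1)"
proof -
  have pos: "\<And>k. 0 < \<alpha> k \<and> 0 < \<beta> k" using ws unfolding weighted_shift_def by blast
  have c: "\<beta> (k1+1,k2) * \<alpha> (k1,k2) = \<alpha> (k1,k2+1) * \<beta> (k1,k2)"
    using cs unfolding commuting_shift_def by blast
  have e1: "moment \<alpha> \<beta> (k1+1,k2+1) = moment \<alpha> \<beta> (k1,k2) * (\<alpha> (k1,k2))^2 * (\<beta> (k1+1,k2))^2"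
    using mom1[OF cs] mom2 by simp
  have e2: "moment \<alpha> \<beta> (k1+2,k2) = moment \<alpha> \<beta> (k1,k2) * (\<alpha> (k1,k2))^2 * (\<alpha> (k1+1,k2))^2"
    using mom1[OF cs, of "Suc k1" k2] mom1[OF cs, of k1 k2] by (simp add: numeral_2_eq_2)
  have e3: "moment \<alpha> \<beta> (k1,k2+2) = moment \<alpha> \<beta> (k1,k2) * (\<beta> (k1,k2))^2 * (\<beta> (k1,k2+1))^2"
    using mom2[of \<alpha> \<beta> k1 "Suc k2"] mom2[of \<alpha> \<beta> k1 k2] by (simp add: numeral_2_eq_2)
  show ?thesis unfolding e1 e2 e3
    by (rule key_eq) (use pos mom_pos[OF ws] c in auto)
qed

theorem proposition3p2:
  fixes \<alpha> \<beta> :: "nat \<times> nat \<Rightarrow> real"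
  assumes "weighted_shift \<alpha> \<beta>" and "commuting_shift \<alpha> \<beta>"
  shows "(L_positive \<alpha> \<beta> \<longleftrightarrow>
            (\<forall>k1 k2. \<alpha> (k1,k2+1) * \<beta> (k1+1,k2) \<le> \<alpha> (k1+1,k2) * \<beta> (k1,k2+1)))
       \<and> ((\<forall>k1 k2. \<alpha> (k1,k2+1) * \<beta> (k1+1,k2) \<le> \<alpha> (k1+1,k2) * \<beta> (k1,k2+1)) \<longleftrightarrow>
            (\<forall>k1 k2. (moment \<alpha> \<beta> (k1+1,k2+1))\<^sup>2 \<le> moment \<alpha> \<beta> (k1+2,k2) * moment \<alpha> \<beta> (k1,k2+2)))"
  using a_to_b[OF assms(1)] b_to_a[OF assms(1)] b_iff_c[OF assms] by blast

end
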